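(* For every positive integer $k$ there is an edge-coloured digraph $D_k$ with two vertices $u,v$ such that: (I) for every set $S$ of $k$ colours there is a rainbow path from $u$ to $v$ with no edge of colour in $S$; and (II) any two rainbow paths from $u$ to $v$ in $D_k$ have a common edge.
   Context: A path is a sequence of distinct vertices with consecutive vertices joined by directed edges; in an edge-coloured digraph it is rainbow if its edges have pairwise distinct colours. *)

theory Defs
  imports Main
begin

definition path_edges :: "'a list \<Rightarrow> ('a \<times> 'a) list" where
  "path_edges p = zip p (tl p)"

definition is_path :: "('a \<times> 'a) set \<Rightarrow> 'a list \<Rightarrow> 'a \<Rightarrow> 'a \<Rightarrow> bool" where
  "is_path E p u v \<longleftrightarrow> p \<noteq> [] \<and> distinct p \<and> hd p = u \<and> last p = v
     \<and> set (path_edges p) \<subseteq> E"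

definition rainbow :: "('a \<times> 'a \<Rightarrow> 'c) \<Rightarrow> 'a list \<Rightarrow> bool" where
  "rainbow c p \<longleftrightarrow> distinct (map c (path_edges p))"

end

theory Submission imports Defs begin

lemma pe_Cons2: "path_edges (x # y # ys) = (x, y) # path_edges (y # ys)"
  by (simp add: path_edges_def)

lemma pe_single: "path_edges [x] = []"
  by (simp add: path_edges_def)

lemma pe_snoc: "p \<noteq> [] \<Longrightarrow> path_edges (p @ [a]) = path_edges p @ [(last p, a)]"
proof (induction p)
  case Nil then show ?case by simp
next
  case (Cons x xs)
  show ?case
  proof (cases xs)
    case Nil then show ?thesis by (simp add: path_edges_def)
  next
    case (Cons y ys)
    then show ?thesis using Cons.IH by (simp add: pe_Cons2)
  qed
qed

lemma visit:
  fixes p :: "nat list"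
  shows "\<lbrakk> \<forall>(a,b)\<in>set (path_edges p). a < b \<and> (\<forall>y\<in>Y. \<not>(a<y \<and> y<b)); p \<noteq> []; y\<in>Y;
     hd p \<le> y; y \<le> last p \<rbrakk> \<Longrightarrow> y \<in> set p"
proof (induction p)
  case Nil then show ?case by simp
next
  case (Cons x xs)
  show ?case
  proof (cases xs)
    case Nil then show ?thesis using Cons.prems by simp
  next
    case (Cons z zs)
    have e: "x < z \<and> (\<forall>y\<in>Y. \<not>(x<y \<and> y<z))" using Cons.prems(1) \<open>xs = z#zs\<close> by (simp add: pe_Cons2)
    show ?thesis
    proof (cases "y = x")
      case True then show ?thesis by simp
    next
      case False
      then have "z \<le> y" using e Cons.prems by auto
      then have "y \<in> set xs" using Cons.IH Cons.prems \<open>xs = z#zs\<close> by (simp add: pe_Cons2)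
      then show ?thesis by simp
    qed
  qed
qed

lemma pred_edge: "\<lbrakk> x \<in> set p; x \<noteq> hd p \<rbrakk> \<Longrightarrow> \<exists>a. (a, x) \<in> set (path_edges p)"
proof (induction p)
  case Nil then show ?case by simp
next
  case (Cons y ys)
  then obtain z zs where ys: "ys = z # zs" by (cases ys) auto
  show ?case
  proof (cases "x = z")
    case True then show ?thesis using ys by (auto simp: pe_Cons2)
  next
    case False
    then show ?thesis using Cons ys by (auto simp: pe_Cons2)
  qed
qed


definition EE :: "nat \<Rightarrow> (nat \<times> nat) set" where
"EE k = {(a,b). \<exists>i<2*k+1. (a = Suc k*i \<and> b = Suc k*Suc i)
    \<or> (\<exists>j<k. a = Suc k*i \<and> b = Suc k*i+1+j) \<or> (\<exists>j<k. a = Suc k*i+1+j \<and> b = Suc k*Suc i)}"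

definition cc :: "nat \<Rightarrow> nat \<times> nat \<Rightarrow> nat" where
"cc k e = (if snd e = fst e + Suc k then 2*k + fst e
   else if fst e mod Suc k = 0 then snd e - fst e - 1 else k + fst e mod Suc k - 1)"

lemma cc_main: "cc k (Suc k*i, Suc k*Suc i) = 2*k + Suc k*i"
  by (simp add: cc_def)

lemma cc_s1: "j < k \<Longrightarrow> cc k (Suc k*i, Suc k*i+1+j) = j"
proof -
  assume "j < k"
  moreover have h: "(Suc k*i) mod Suc k = 0" by (rule mod_mult_self1_is_0)
  ultimately show ?thesis by (simp add: cc_def h del: mult_Suc)
qed

lemma cc_s2: "j < k \<Longrightarrow> cc k (Suc k*i+1+j, Suc k*Suc i) = k + j"
proof -
  assume j: "j < k"
  have m: "(Suc k*i+1+j) mod Suc k = Suc j" using j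
    by (metis Suc_less_eq add.commute add_Suc_right mod_less mod_mult_self2 plus_1_eq_Suc mult.commute)
  show ?thesis using j m by (simp add: cc_def)
qed

lemma nomult: "Suc k * i < Suc k * t \<Longrightarrow> Suc k * t < Suc k * Suc i \<Longrightarrow> False"
  by (metis less_Suc_eq_le mult_less_cancel1 not_le)

lemma EE_props:
  assumes "(a,b) \<in> EE k"
  shows "a < b \<and> (\<forall>y\<in>range (\<lambda>t. Suc k * t). \<not>(a<y \<and> y<b)) \<and> b \<le> Suc k * (2*k+1)"
proof -
  obtain i where i: "i < 2*k+1" and c: "(a = Suc k*i \<and> b = Suc k*Suc i)
    \<or> (\<exists>j<k. a = Suc k*i \<and> b = Suc k*i+1+j) \<or> (\<exists>j<k. a = Suc k*i+1+j \<and> b = Suc k*Suc i)"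
    using assms by (auto simp: EE_def)
  have r: "Suc k * i \<le> a \<and> a < b \<and> b \<le> Suc k * Suc i" using c by auto
  have b: "Suc k * Suc i \<le> Suc k * (2*k+1)" using i by (simp only: mult_le_cancel1) simp
  have "\<forall>y\<in>range (\<lambda>t. Suc k * t). \<not>(a<y \<and> y<b)"
  proof
    fix y assume "y \<in> range (\<lambda>t. Suc k * t)"
    then obtain t where t: "y = Suc k * t" by blast
    show "\<not>(a<y \<and> y<b)"
    proof
      assume "a<y \<and> y<b"
      then have "Suc k * i < Suc k * t" "Suc k * t < Suc k * Suc i" using r t by linarith+
      then show False by (rule nomult)
    qed
  qed
  then show ?thesis using r b by linarith
qed

lemma EE_into:
  assumes "(a, Suc k * i) \<in> EE k"
  shows "(1 \<le> i \<and> i \<le> 2*k+1) \<and> (a = Suc k * i - Suc k \<or> (k \<le> cc k (a, Suc k*i) \<and> cc k (a, Suc k*i) < 2*k))"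
proof -
  obtain i' where i: "i' < 2*k+1" and c: "(a = Suc k*i' \<and> Suc k * i = Suc k*Suc i')
    \<or> (\<exists>j<k. a = Suc k*i' \<and> Suc k * i = Suc k*i'+1+j) \<or> (\<exists>j<k. a = Suc k*i'+1+j \<and> Suc k * i = Suc k*Suc i')"
    using assms by (auto simp: EE_def)
  have n2: "\<not> (\<exists>j<k. Suc k * i = Suc k*i'+1+j)"
  proof
    assume "\<exists>j<k. Suc k * i = Suc k*i'+1+j"
    then obtain j where "j<k" "Suc k * i = Suc k*i'+1+j" by blast
    then show False using nomult[of k i' i] by simp
  qed
  show ?thesis
  proof (cases "a = Suc k*i'")
    case True
    then have "Suc k * i = Suc k*Suc i'" using c n2 by auto
    then have "i = Suc i'" by (simp only: mult_cancel1) simp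
    then show ?thesis using True i by simp
  next
    case False
    then obtain j where j: "j<k" "a = Suc k*i'+1+j" and ii0: "Suc k * i = Suc k*Suc i'" using c n2 by auto
    then have ii: "i = Suc i'" by (simp only: mult_cancel1) simp
    have "cc k (a, Suc k*i) = k + j" using cc_s2[of j k i'] j ii by simp
    then show ?thesis using ii i j by simp
  qed
qed


lemma build:
  fixes k :: nat and S :: "nat set" and g :: "nat \<Rightarrow> nat option"
  assumes gN: "\<And>i. i < 2*k+1 \<Longrightarrow> g i = None \<Longrightarrow> 2*k + Suc k*i \<notin> S"
  and gS: "\<And>i j. i < 2*k+1 \<Longrightarrow> g i = Some j \<Longrightarrow> j < k \<and> j \<notin> S \<and> k+j \<notin> S"
  and ginj: "\<And>i i' j. g i = Some j \<Longrightarrow> g i' = Some j \<Longrightarrow> i = i'"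
  shows "n \<le> 2*k+1 \<Longrightarrow> \<exists>p. p \<noteq> [] \<and> distinct p \<and> hd p = 0 \<and> last p = Suc k*n \<and> set p \<subseteq> {..Suc k*n}
     \<and> set (path_edges p) \<subseteq> EE k \<and> distinct (map (cc k) (path_edges p))
     \<and> (\<forall>e\<in>set (path_edges p). cc k e \<notin> S \<and> (\<exists>i<n. (g i = None \<and> cc k e = 2*k+Suc k*i)
          \<or> (\<exists>j. g i = Some j \<and> (cc k e = j \<or> cc k e = k+j))))"
proof (induction n)
  case 0
  show ?case by (rule exI[of _ "[0]"]) (simp add: pe_single)
next
  case (Suc n)
  then have nlt: "n < 2*k+1" by simp
  from Suc obtain p where p: "p \<noteq> []" "distinct p" "hd p = 0" "last p = Suc k*n" "set p \<subseteq> {..Suc k*n}"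
     "set (path_edges p) \<subseteq> EE k" "distinct (map (cc k) (path_edges p))"
     and pc: "\<forall>e\<in>set (path_edges p). cc k e \<notin> S \<and> (\<exists>i<n. (g i = None \<and> cc k e = 2*k+Suc k*i)
          \<or> (\<exists>j. g i = Some j \<and> (cc k e = j \<or> cc k e = k+j)))" by auto
  have KK: "Suc k * Suc n = Suc k * n + Suc k" by simp
  have mono: "\<And>i. i < n \<Longrightarrow> Suc k * i < Suc k * n" by (simp only: mult_less_cancel1) simp
  show ?case
  proof (cases "g n")
    case None
    define x where "x = Suc k * Suc n"
    have pe: "path_edges (p @ [x]) = path_edges p @ [(Suc k*n, x)]" using pe_snoc[OF p(1)] p(4) by simp
    have cx: "cc k (Suc k*n, x) = 2*k + Suc k*n" unfolding x_def by (rule cc_main)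
    have xnot: "x \<notin> set p" using p(5) KK x_def by auto
    have ex: "(Suc k*n, x) \<in> EE k" using nlt unfolding EE_def x_def by blast
    have cnew: "cc k (Suc k*n, x) \<notin> cc k ` set (path_edges p)"
    proof
      assume "cc k (Suc k*n, x) \<in> cc k ` set (path_edges p)"
      then obtain e where e: "e \<in> set (path_edges p)" "cc k e = 2*k + Suc k*n" using cx by auto
      then obtain i where i: "i<n" "(g i = None \<and> cc k e = 2*k+Suc k*i) \<or> (\<exists>j. g i = Some j \<and> (cc k e = j \<or> cc k e = k+j))"
        using pc by blast
      show False
      proof (cases "g i")
        case None then show False using i e mono[of i] by auto
      next
        case (Some j) then have "j < k" using gS[of i j] i nlt by simp
        then show False using i e Some by auto
      qed
    qed
    show ?thesis
    proof (rule exI[of _ "p @ [x]"], intro conjI)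
      show "p @ [x] \<noteq> []" by simp
      show "distinct (p @ [x])" using p(2) xnot by simp
      show "hd (p @ [x]) = 0" using p by simp
      show "last (p @ [x]) = Suc k * Suc n" using x_def by simp
      show "set (p @ [x]) \<subseteq> {..Suc k * Suc n}" using p(5) KK x_def by auto
      show "set (path_edges (p @ [x])) \<subseteq> EE k" using pe p(6) ex by simp
      show "distinct (map (cc k) (path_edges (p @ [x])))" using pe p(7) cnew by simp
      show "\<forall>e\<in>set (path_edges (p @ [x])). cc k e \<notin> S \<and> (\<exists>i<Suc n. (g i = None \<and> cc k e = 2*k+Suc k*i)
          \<or> (\<exists>j. g i = Some j \<and> (cc k e = j \<or> cc k e = k+j)))"
      proof
        fix e assume "e \<in> set (path_edges (p @ [x]))"
        then have "e \<in> set (path_edges p) \<or> e = (Suc k*n, x)" using pe by auto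
        then show "cc k e \<notin> S \<and> (\<exists>i<Suc n. (g i = None \<and> cc k e = 2*k+Suc k*i)
          \<or> (\<exists>j. g i = Some j \<and> (cc k e = j \<or> cc k e = k+j)))"
        proof
          assume e: "e \<in> set (path_edges p)"
          then obtain i where "i < n" "(g i = None \<and> cc k e = 2*k+Suc k*i)
              \<or> (\<exists>j. g i = Some j \<and> (cc k e = j \<or> cc k e = k+j))" using pc by blast
          then show ?thesis using pc e less_SucI by blast
        next
          assume "e = (Suc k*n, x)"
          then show ?thesis using cx gN[OF nlt None] None lessI by (simp del: mult_Suc) blast
        qed
      qed
    qed
  next
    case (Some j)
    have j: "j < k" "j \<notin> S" "k+j \<notin> S" using gS[OF nlt Some] by auto
    define w where "w = Suc k * n + 1 + j"
    define x where "x = Suc k * Suc n"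
    have pe: "path_edges (p @ [w, x]) = path_edges p @ [(Suc k*n, w), (w, x)]"
    proof -
      have "path_edges ((p @ [w]) @ [x]) = path_edges (p @ [w]) @ [(w, x)]" using pe_snoc[of "p@[w]" x] by simp
      also have "\<dots> = path_edges p @ [(Suc k*n, w), (w, x)]" using pe_snoc[OF p(1), of w] p(4) by simp
      finally show ?thesis by simp
    qed
    have c1: "cc k (Suc k*n, w) = j" unfolding w_def by (rule cc_s1[OF j(1)])
    have c2: "cc k (w, x) = k + j" unfolding w_def x_def by (rule cc_s2[OF j(1)])
    have wx: "Suc k * n < w" "w < x" using j(1) unfolding w_def x_def by auto
    have wnot: "w \<notin> set p" "x \<notin> set p" using p(5) wx by auto
    have ex: "(Suc k*n, w) \<in> EE k" "(w, x) \<in> EE k" using nlt j(1) unfolding EE_def x_def w_def by blast+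
    have cnew: "j \<notin> cc k ` set (path_edges p)" "k + j \<notin> cc k ` set (path_edges p)"
    proof -
      have "\<And>e. e \<in> set (path_edges p) \<Longrightarrow> cc k e \<noteq> j \<and> cc k e \<noteq> k + j"
      proof -
        fix e assume e: "e \<in> set (path_edges p)"
        then obtain i where i: "i<n" "(g i = None \<and> cc k e = 2*k+Suc k*i) \<or> (\<exists>j. g i = Some j \<and> (cc k e = j \<or> cc k e = k+j))"
          using pc by blast
        show "cc k e \<noteq> j \<and> cc k e \<noteq> k + j"
        proof (cases "g i")
          case None then show ?thesis using i j by auto
        next
          case (Some j')
          have "j' < k" using gS[of i j'] i nlt Some by simp
          moreover have "j' \<noteq> j" using ginj[of i j n] Some \<open>g n = Some j\<close> i by auto
          ultimately show ?thesis using i Some j by auto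
        qed
      qed
      note H = this
      show "j \<notin> cc k ` set (path_edges p)"
      proof
        assume "j \<in> cc k ` set (path_edges p)"
        then obtain e where "e \<in> set (path_edges p)" "j = cc k e" by (rule imageE)
        then show False using H[of e] by simp
      qed
      show "k + j \<notin> cc k ` set (path_edges p)"
      proof
        assume "k + j \<in> cc k ` set (path_edges p)"
        then obtain e where "e \<in> set (path_edges p)" "k + j = cc k e" by (rule imageE)
        then show False using H[of e] by simp
      qed
    qed
    show ?thesis
    proof (rule exI[of _ "p @ [w, x]"], intro conjI)
      show "p @ [w, x] \<noteq> []" by simp
      show "distinct (p @ [w, x])" using p(2) wnot wx by simp
      show "hd (p @ [w, x]) = 0" using p by simp
      show "last (p @ [w, x]) = Suc k * Suc n" using x_def by simp
      show "set (p @ [w, x]) \<subseteq> {..Suc k * Suc n}" using p(5) KK x_def wx by auto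
      show "set (path_edges (p @ [w, x])) \<subseteq> EE k" using pe p(6) ex by simp
      show "distinct (map (cc k) (path_edges (p @ [w, x])))" using pe p(7) cnew c1 c2 j(1) by simp
      show "\<forall>e\<in>set (path_edges (p @ [w, x])). cc k e \<notin> S \<and> (\<exists>i<Suc n. (g i = None \<and> cc k e = 2*k+Suc k*i)
          \<or> (\<exists>j. g i = Some j \<and> (cc k e = j \<or> cc k e = k+j)))"
      proof
        fix e assume "e \<in> set (path_edges (p @ [w, x]))"
        then have "e \<in> set (path_edges p) \<or> e = (Suc k*n, w) \<or> e = (w, x)" using pe by auto
        then show "cc k e \<notin> S \<and> (\<exists>i<Suc n. (g i = None \<and> cc k e = 2*k+Suc k*i)
          \<or> (\<exists>j. g i = Some j \<and> (cc k e = j \<or> cc k e = k+j)))"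
        proof (elim disjE)
          assume e: "e \<in> set (path_edges p)"
          then obtain i where "i < n" "(g i = None \<and> cc k e = 2*k+Suc k*i)
              \<or> (\<exists>j. g i = Some j \<and> (cc k e = j \<or> cc k e = k+j))" using pc by blast
          then show ?thesis using pc e less_SucI by blast
        next
          assume "e = (Suc k*n, w)"
          then show ?thesis using c1 j Some lessI by (simp del: mult_Suc) blast
        next
          assume "e = (w, x)"
          then show ?thesis using c2 j Some lessI by (simp del: mult_Suc) blast
        qed
      qed
    qed
  qed
qed


lemma card_part:
  assumes fS: "finite S" and cS: "card S = k"
  shows "card {i. i<2*k+1 \<and> 2*k+Suc k*i \<in> S} \<le> card {j. j<k \<and> j\<notin>S \<and> k+j \<notin> S}"
proof -
  define Sk where "Sk = {i. i<2*k+1 \<and> 2*k+Suc k*i \<in> S}"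
  define H where "H = S \<inter> {2*k..}"
  define L where "L = S \<inter> {..<2*k}"
  define G where "G = {j. j<k \<and> (j\<in>S \<or> k+j \<in> S)}"
  have "inj_on (\<lambda>i. 2*k+Suc k*i) Sk" by (auto simp: inj_on_def simp del: mult_Suc)
  moreover have "(\<lambda>i. 2*k+Suc k*i) ` Sk \<subseteq> H" by (auto simp: Sk_def H_def)
  ultimately have c1: "card Sk \<le> card H" using card_inj_on_le fS H_def by blast
  have "S = L \<union> H" "L \<inter> H = {}" by (auto simp: L_def H_def)
  then have c2: "card L + card H = k" using card_Un_disjoint[of L H] fS cS L_def H_def by auto
  have "L = (S \<inter> {..<k}) \<union> (S \<inter> {k..<2*k})" "(S \<inter> {..<k}) \<inter> (S \<inter> {k..<2*k}) = {}"
    by (auto simp: L_def)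
  then have c3: "card L = card (S \<inter> {..<k}) + card (S \<inter> {k..<2*k})" using card_Un_disjoint fS by (metis finite_Int)
  have "G \<subseteq> (S \<inter> {..<k}) \<union> ((\<lambda>x. x - k) ` (S \<inter> {k..<2*k}))"
  proof
    fix j assume "j \<in> G"
    then have "j < k" "j \<in> S \<or> k + j \<in> S" by (auto simp: G_def)
    then show "j \<in> (S \<inter> {..<k}) \<union> ((\<lambda>x. x - k) ` (S \<inter> {k..<2*k}))"
    proof (cases "j \<in> S")
      case False
      then have "k + j \<in> S \<inter> {k..<2*k}" using \<open>j<k\<close> \<open>j \<in> S \<or> k + j \<in> S\<close> by auto
      then show ?thesis by (auto intro!: image_eqI[of j _ "k+j"])
    qed auto
  qed
  then have "card G \<le> card ((S \<inter> {..<k}) \<union> ((\<lambda>x. x - k) ` (S \<inter> {k..<2*k})))"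
    by (rule card_mono[rotated]) (simp add: fS)
  also have "\<dots> \<le> card (S \<inter> {..<k}) + card ((\<lambda>x. x - k) ` (S \<inter> {k..<2*k}))" by (rule card_Un_le)
  also have "\<dots> \<le> card (S \<inter> {..<k}) + card (S \<inter> {k..<2*k})" using card_image_le[of "S \<inter> {k..<2*k}" "\<lambda>x. x - k"] fS by simp
  finally have c4: "card G \<le> card L" using c3 by simp
  have "{j. j<k \<and> j\<notin>S \<and> k+j \<notin> S} = {..<k} - G" by (auto simp: G_def)
  moreover have "G \<subseteq> {..<k}" by (auto simp: G_def)
  ultimately have "card {j. j<k \<and> j\<notin>S \<and> k+j \<notin> S} = k - card G"
    by (simp add: card_Diff_subset finite_subset)
  then show ?thesis using c1 c2 c4 Sk_def by simp
qed

lemma part2: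
  assumes pp: "is_path (EE k) p 0 (Suc k * (2*k+1))" and rb: "rainbow (cc k) p"
  shows "k + 1 \<le> card {i \<in> {1..2*k+1}. (Suc k*i - Suc k, Suc k*i) \<in> set (path_edges p)}"
proof -
  define m where "m = 2*k+1"
  define A where "A = {i \<in> {1..m}. (Suc k*i - Suc k, Suc k*i) \<in> set (path_edges p)}"
  define B where "B = {1..m} - A"
  have p: "p \<noteq> []" "distinct p" "hd p = 0" "last p = Suc k * m" "set (path_edges p) \<subseteq> EE k"
    using pp by (auto simp: is_path_def m_def)
  have injc: "inj_on (cc k) (set (path_edges p))" using rb by (simp add: rainbow_def distinct_map)
  have eprop: "\<forall>(a,b)\<in>set (path_edges p). a < b \<and> (\<forall>y\<in>range (\<lambda>t. Suc k * t). \<not>(a<y \<and> y<b))"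
    using p(5) EE_props by blast
  have vis: "\<And>i. i \<le> m \<Longrightarrow> Suc k * i \<in> set p"
  proof -
    fix i assume "i \<le> m"
    then have "Suc k * i \<le> Suc k * m" by (simp only: mult_le_cancel1) simp
    then show "Suc k * i \<in> set p" using visit[OF eprop p(1)] p by auto
  qed
  define h where "h i = (SOME a. (a, Suc k * i) \<in> set (path_edges p))" for i
  have hin: "\<And>i. i \<in> {1..m} \<Longrightarrow> (h i, Suc k * i) \<in> set (path_edges p)"
  proof -
    fix i assume i: "i \<in> {1..m}"
    then have "\<exists>a. (a, Suc k * i) \<in> set (path_edges p)" using pred_edge[OF vis] p(3) by auto
    then show "(h i, Suc k * i) \<in> set (path_edges p)" unfolding h_def by (rule someI_ex)
  qed
  define f where "f i = cc k (h i, Suc k * i)" for i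
  have fr: "f ` B \<subseteq> {k..<2*k}"
  proof
    fix y assume "y \<in> f ` B"
    then obtain i where i: "i \<in> B" "y = f i" by blast
    then have i1: "i \<in> {1..m}" "i \<notin> A" by (auto simp: B_def)
    have e: "(h i, Suc k * i) \<in> set (path_edges p)" using hin i1 by blast
    then have "h i \<noteq> Suc k*i - Suc k" using i1 by (auto simp: A_def)
    then show "y \<in> {k..<2*k}" using EE_into[of "h i" k i] e p(5) i f_def by auto
  qed
  have "inj_on f B"
  proof (rule inj_onI)
    fix i i' assume ii: "i \<in> B" "i' \<in> B" "f i = f i'"
    have "(h i, Suc k * i) = (h i', Suc k * i')"
      using injc hin ii unfolding f_def B_def inj_on_def by blast
    then show "i = i'" by (simp del: mult_Suc)
  qed
  then have "card B \<le> card {k..<2*k}" using card_inj_on_le fr by blast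
  then have cB: "card B \<le> k" by simp
  have "A \<subseteq> {1..m}" by (auto simp: A_def)
  then have "card B = m - card A" unfolding B_def by (simp add: card_Diff_subset finite_subset)
  then show ?thesis using cB A_def m_def by simp
qed


theorem mainTheorem16:
  fixes k :: nat
  assumes "k > 0"
  shows "\<exists>(V :: nat set) (E :: (nat \<times> nat) set) (c :: nat \<times> nat \<Rightarrow> nat) u v.
    finite V \<and> E \<subseteq> V \<times> V \<and> u \<in> V \<and> v \<in> V \<and> u \<noteq> v \<and>
    (\<forall>S :: nat set. card S = k \<longrightarrow>
       (\<exists>p. is_path E p u v \<and> rainbow c p \<and> (\<forall>e \<in> set (path_edges p). c e \<notin> S))) \<and>
    (\<forall>p q. is_path E p u v \<and> rainbow c p \<and> is_path E q u v \<and> rainbow c q \<longrightarrow>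
       set (path_edges p) \<inter> set (path_edges q) \<noteq> {})"
proof -
  define N where "N = Suc k * (2*k+1)"
  show ?thesis
  proof (rule exI[of _ "{..N}"], rule exI[of _ "EE k"], rule exI[of _ "cc k"], rule exI[of _ 0], rule exI[of _ N], intro conjI)
  show "finite {..N}" by simp
  show "EE k \<subseteq> {..N} \<times> {..N}"
  proof
    fix e assume e: "e \<in> EE k"
    obtain a b where ab: "e = (a,b)" by fastforce
    then have "a < b" "b \<le> N" using EE_props[of a b k] e N_def by auto
    then show "e \<in> {..N} \<times> {..N}" using ab by auto
  qed
  show "0 \<in> {..N}" by simp
  show "N \<in> {..N}" by simp
  show "0 \<noteq> N" by (simp add: N_def)
  show "\<forall>S :: nat set. card S = k \<longrightarrow>
       (\<exists>p. is_path (EE k) p 0 N \<and> rainbow (cc k) p \<and> (\<forall>e \<in> set (path_edges p). cc k e \<notin> S))"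
  proof (intro allI impI)
    fix S :: "nat set" assume cS: "card S = k"
    then have fS: "finite S" using assms card_ge_0_finite by blast
    define Sk where "Sk = {i. i<2*k+1 \<and> 2*k+Suc k*i \<in> S}"
    define F where "F = {j. j<k \<and> j\<notin>S \<and> k+j \<notin> S}"
    have "card Sk \<le> card F" using card_part[OF fS cS] Sk_def F_def by simp
    then obtain f where f: "f ` Sk \<subseteq> F" "inj_on f Sk"
      using card_le_inj[of Sk F] by (auto simp: Sk_def F_def)
    define g where "g i = (if i \<in> Sk then Some (f i) else None)" for i
    have gN: "\<And>i. i < 2*k+1 \<Longrightarrow> g i = None \<Longrightarrow> 2*k + Suc k*i \<notin> S"
      by (auto simp: g_def Sk_def split: if_splits)
    have gS: "\<And>i j. i < 2*k+1 \<Longrightarrow> g i = Some j \<Longrightarrow> j < k \<and> j \<notin> S \<and> k+j \<notin> S"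
      using f(1) by (auto simp: g_def F_def split: if_splits)
    have ginj: "\<And>i i' j. g i = Some j \<Longrightarrow> g i' = Some j \<Longrightarrow> i = i'"
      using f(2) by (auto simp: g_def inj_on_def split: if_splits)
    have ex: "\<exists>p. p \<noteq> [] \<and> distinct p \<and> hd p = 0 \<and> last p = Suc k*(2*k+1) \<and> set p \<subseteq> {..Suc k*(2*k+1)}
     \<and> set (path_edges p) \<subseteq> EE k \<and> distinct (map (cc k) (path_edges p))
     \<and> (\<forall>e\<in>set (path_edges p). cc k e \<notin> S \<and> (\<exists>i<2*k+1. (g i = None \<and> cc k e = 2*k+Suc k*i)
          \<or> (\<exists>j. g i = Some j \<and> (cc k e = j \<or> cc k e = k+j))))"
      apply (rule build[of k g S "2*k+1"])
      subgoal by (rule gN)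
      subgoal by (rule gS)
      subgoal by (rule ginj)
      subgoal by (rule order_refl)
      done
    then obtain p where p: "p \<noteq> []" "distinct p" "hd p = 0" "last p = Suc k*(2*k+1)"
       "set (path_edges p) \<subseteq> EE k" "distinct (map (cc k) (path_edges p))"
       and p7: "\<forall>e\<in>set (path_edges p). cc k e \<notin> S \<and> (\<exists>i<2*k+1. (g i = None \<and> cc k e = 2*k+Suc k*i)
          \<or> (\<exists>j. g i = Some j \<and> (cc k e = j \<or> cc k e = k+j)))"
      by (elim exE conjE) (rule that)
    have "last p = N" using p(4) by (simp only: N_def)
    then have "is_path (EE k) p 0 N" unfolding is_path_def using p by blast
    moreover have "rainbow (cc k) p" unfolding rainbow_def using p(6) .
    moreover have "\<forall>e \<in> set (path_edges p). cc k e \<notin> S" using p7 by blast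
    ultimately show "\<exists>p. is_path (EE k) p 0 N \<and> rainbow (cc k) p \<and> (\<forall>e \<in> set (path_edges p). cc k e \<notin> S)"
      by blast
  qed
  show "\<forall>p q. is_path (EE k) p 0 N \<and> rainbow (cc k) p \<and> is_path (EE k) q 0 N \<and> rainbow (cc k) q \<longrightarrow>
       set (path_edges p) \<inter> set (path_edges q) \<noteq> {}"
  proof (intro allI impI)
    fix p q assume pq: "is_path (EE k) p 0 N \<and> rainbow (cc k) p \<and> is_path (EE k) q 0 N \<and> rainbow (cc k) q"
    define A where "A p = {i \<in> {1..2*k+1}. (Suc k*i - Suc k, Suc k*i) \<in> set (path_edges p)}" for p
    have ip: "is_path (EE k) p 0 (Suc k*(2*k+1))" "is_path (EE k) q 0 (Suc k*(2*k+1))"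
      using pq by (simp_all only: N_def)
    have cA: "k+1 \<le> card (A p)" "k+1 \<le> card (A q)" unfolding A_def
      using part2[OF ip(1)] part2[OF ip(2)] pq by blast+
    have sub: "A p \<subseteq> {1..2*k+1}" "A q \<subseteq> {1..2*k+1}" by (auto simp: A_def)
    have "A p \<inter> A q \<noteq> {}"
    proof
      assume d: "A p \<inter> A q = {}"
      have "card (A p \<union> A q) = card (A p) + card (A q)"
        using d sub by (intro card_Un_disjoint) (auto intro: finite_subset)
      moreover have "card (A p \<union> A q) \<le> card {1..2*k+1}" using sub by (intro card_mono) auto
      ultimately show False using cA by simp
    qed
    then obtain i where "i \<in> A p" "i \<in> A q" by blast
    then show "set (path_edges p) \<inter> set (path_edges q) \<noteq> {}" by (auto simp: A_def)
  qed
qed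
qed

end
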